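(* Let $\mathcal{M}=(E,\mathcal{B})$ be a matroid. If $\operatorname{rk}(\mathcal{M})\le 2$ or $|E|\le 5$, then the base configuration $V_{\mathcal{M}}$ is $2$-level.
   Context: The base configuration of a matroid $\mathcal{M}=(E,\mathcal{B})$ is $V_{\mathcal{M}}=\{\mathbf{1}_B:B\in\mathcal{B}\}\subset\mathbb{R}^E$. For a finite point set $V$ and an affine function $\ell$ nonnegative on $V$, $\{v\in V:\ell(v)=0\}$ is a face; inclusion-maximal faces different from $V$ are facets and the corresponding $\ell$ facet-defining. $V$ is $k$-level if every facet-defining affine function takes at most $k$ distinct values on $V$. *)

theory Defs
  imports Main "HOL-Library.Indicator_Function"
begin

definition matroid :: "'a set \<Rightarrow> 'a set set \<Rightarrow> bool" where
  "matroid E \<B> \<longleftrightarrow> finite E \<and> \<B> \<noteq> {} \<and> (\<forall>B\<in>\<B>. B \<subseteq> E) \<and>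
     (\<forall>B1\<in>\<B>. \<forall>B2\<in>\<B>. \<forall>x\<in>B1 - B2. \<exists>y\<in>B2 - B1. insert y (B1 - {x}) \<in> \<B>)"

definition matroid_rank :: "'a set \<Rightarrow> 'a set set \<Rightarrow> nat" where
  "matroid_rank E \<B> = card (SOME B. B \<in> \<B>)"

text \<open>Points of R^E are functions E -> real (zero outside E).
  Base configuration: indicator vectors of the bases.\<close>
definition base_config :: "'a set \<Rightarrow> 'a set set \<Rightarrow> ('a \<Rightarrow> real) set" where
  "base_config E \<B> = {indicator B | B. B \<in> \<B>}"

definition aff_val :: "'a set \<Rightarrow> ('a \<Rightarrow> real) \<Rightarrow> real \<Rightarrow> ('a \<Rightarrow> real) \<Rightarrow> real" where
  "aff_val E a c v = c + (\<Sum>e\<in>E. a e * v e)"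

definition face :: "'a set \<Rightarrow> ('a \<Rightarrow> real) set \<Rightarrow> ('a \<Rightarrow> real) set \<Rightarrow> bool" where
  "face E V F \<longleftrightarrow> (\<exists>a c. (\<forall>v\<in>V. aff_val E a c v \<ge> 0) \<and> F = {v\<in>V. aff_val E a c v = 0})"

definition facet :: "'a set \<Rightarrow> ('a \<Rightarrow> real) set \<Rightarrow> ('a \<Rightarrow> real) set \<Rightarrow> bool" where
  "facet E V F \<longleftrightarrow> face E V F \<and> F \<noteq> V \<and>
     (\<forall>G. face E V G \<and> G \<noteq> V \<and> F \<subseteq> G \<longrightarrow> G = F)"

definition facet_defining :: "'a set \<Rightarrow> ('a \<Rightarrow> real) set \<Rightarrow> ('a \<Rightarrow> real) \<Rightarrow> real \<Rightarrow> bool" where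
  "facet_defining E V a c \<longleftrightarrow> (\<forall>v\<in>V. aff_val E a c v \<ge> 0) \<and> facet E V {v\<in>V. aff_val E a c v = 0}"

definition k_level :: "'a set \<Rightarrow> ('a \<Rightarrow> real) set \<Rightarrow> nat \<Rightarrow> bool" where
  "k_level E V k \<longleftrightarrow> (\<forall>a c. facet_defining E V a c \<longrightarrow> card (aff_val E a c ` V) \<le> k)"

end

theory Submission
  imports Defs
begin


lemma m_fin: "matroid E \<B> \<Longrightarrow> B \<in> \<B> \<Longrightarrow> finite B"
  unfolding matroid_def by (meson finite_subset)

lemma m_sub: "matroid E \<B> \<Longrightarrow> B \<in> \<B> \<Longrightarrow> B \<subseteq> E"
  unfolding matroid_def by blast

lemma m_exch: "matroid E \<B> \<Longrightarrow> B1\<in>\<B> \<Longrightarrow> B2\<in>\<B> \<Longrightarrow> x \<in> B1 - B2 \<Longrightarrow> \<exists>y\<in>B2-B1. insert y (B1-{x}) \<in> \<B>"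
  unfolding matroid_def by blast

lemma card_eq_aux:
  assumes M: "matroid E \<B>" and B2: "B2 \<in> \<B>"
  shows "B1 \<in> \<B> \<Longrightarrow> card (B1 - B2) = n \<Longrightarrow> card B1 = card B2"
proof (induction n arbitrary: B1)
  case 0
  have fin1: "finite B1" using m_fin[OF M 0(1)] .
  hence "B1 \<subseteq> B2" using 0 by auto
  show ?case
  proof (cases "B2 \<subseteq> B1")
    case True thus ?thesis using \<open>B1 \<subseteq> B2\<close> by auto
  next
    case False then obtain x where "x \<in> B2 - B1" by auto
    from m_exch[OF M B2 0(1) this] obtain y where "y \<in> B1 - B2" by auto
    with \<open>B1\<subseteq>B2\<close> show ?thesis by auto
  qed
next
  case (Suc n)
  have fin: "finite B1" using m_fin[OF M Suc(2)] .
  have "B1 - B2 \<noteq> {}" using Suc.prems(2) by (metis card.empty nat.distinct(1))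
  then obtain x where x: "x \<in> B1 - B2" by auto
  from m_exch[OF M Suc(2) B2 x] obtain y where y: "y \<in> B2 - B1" "insert y (B1 - {x}) \<in> \<B>" by auto
  let ?B = "insert y (B1 - {x})"
  have "?B - B2 = (B1 - B2) - {x}" using x y by auto
  hence "card (?B - B2) = n" using Suc x fin by simp
  hence "card ?B = card B2" using Suc.IH y(2) by blast
  moreover have "card ?B = card B1"
  proof -
    have "card ?B = Suc (card (B1 - {x}))" using y fin by simp
    also have "\<dots> = card B1" using x fin by (simp add: card_Diff_singleton card_gt_0_iff del: card_Diff_insert) (metis DiffD1 card_gt_0_iff empty_iff Suc_pred)
    finally show ?thesis .
  qed
  ultimately show ?case by simp
qed

lemma card_eq: "matroid E \<B> \<Longrightarrow> B1 \<in> \<B> \<Longrightarrow> B2 \<in> \<B> \<Longrightarrow> card B1 = card B2"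
  using card_eq_aux by blast

lemma dual_exch_aux:
  assumes M: "matroid E \<B>" and B1: "B1 \<in> \<B>"
  shows "B2 \<in> \<B> \<Longrightarrow> card (B2 - B1) = n \<Longrightarrow> x \<in> B2 - B1 \<Longrightarrow> \<exists>y\<in>B1-B2. insert x (B1-{y}) \<in> \<B>"
proof (induction n arbitrary: B2)
  case 0
  have "finite B2" using m_fin[OF M 0(1)] .
  then show ?case using 0 by auto
next
  case (Suc n)
  have fin2: "finite B2" using m_fin[OF M Suc(2)] .
  have fin1: "finite B1" using m_fin[OF M B1] .
  show ?case
  proof (cases "B2 - B1 = {x}")
    case True
    have "card B1 = card B2" using card_eq[OF M B1 Suc(2)] .
    hence "card (B1 - B2) = card (B2 - B1)" using fin1 fin2
      by (simp add: card_Diff_subset_Int Int_commute)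
    hence "card (B1 - B2) = 1" using True by simp
    then obtain y where y: "B1 - B2 = {y}" using card_1_singletonE by blast
    have "insert x (B1 - {y}) = B2" using y True by blast
    thus ?thesis using y Suc(2) by auto
  next
    case False
    then obtain z where z: "z \<in> B2 - B1" "z \<noteq> x" using Suc(4) by blast
    from m_exch[OF M Suc(2) B1 z(1)] obtain u where u: "u \<in> B1 - B2" "insert u (B2 - {z}) \<in> \<B>" by auto
    let ?B = "insert u (B2 - {z})"
    have "?B - B1 = (B2 - B1) - {z}" using u z by auto
    hence "card (?B - B1) = n" using Suc z fin2 by simp
    moreover have "x \<in> ?B - B1" using Suc(4) z by auto
    ultimately obtain y where y: "y \<in> B1 - ?B" "insert x (B1 - {y}) \<in> \<B>" using Suc.IH u(2) by blast
    have "y \<in> B1 - B2" using y z by auto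
    thus ?thesis using y by blast
  qed
qed

lemma dual_matroid: assumes M: "matroid E \<B>" shows "matroid E ((\<lambda>B. E - B) ` \<B>)"
  unfolding matroid_def
proof (intro conjI ballI)
  show "finite E" "(\<lambda>B. E - B) ` \<B> \<noteq> {}" using M unfolding matroid_def by auto
  fix B assume "B \<in> (\<lambda>B. E - B) ` \<B>" thus "B \<subseteq> E" by auto
next
  fix C1 C2 x assume C1: "C1 \<in> (\<lambda>B. E - B) ` \<B>" and C2: "C2 \<in> (\<lambda>B. E - B) ` \<B>" and x: "x \<in> C1 - C2"
  obtain B1 where B1: "B1 \<in> \<B>" "C1 = E - B1" using C1 by auto
  obtain B2 where B2: "B2 \<in> \<B>" "C2 = E - B2" using C2 by auto
  have "x \<in> B2 - B1" using x B1 B2 by auto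
  from dual_exch_aux[OF M B1(1) B2(1) refl this] obtain y where y: "y \<in> B1 - B2" "insert x (B1 - {y}) \<in> \<B>" by blast
  have "y \<in> C2 - C1" using y B1 B2 m_sub[OF M B1(1)] by auto
  moreover have "insert y (C1 - {x}) = E - insert x (B1 - {y})" using y B1 B2 x m_sub[OF M B1(1)] by auto
  ultimately show "\<exists>y\<in>C2 - C1. insert y (C1 - {x}) \<in> (\<lambda>B. E - B) ` \<B>" using y by blast
qed



definition wit :: "'a set \<Rightarrow> 'a set set \<Rightarrow> 'a set set \<Rightarrow> 'a set \<Rightarrow> nat \<Rightarrow> bool" where
 "wit E \<B> F T k \<longleftrightarrow> T \<subseteq> E \<and> (\<forall>B\<in>\<B>. card (B\<inter>T) = k \<or> card (B\<inter>T) = Suc k) \<and>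
    ((\<forall>B\<in>F. card (B\<inter>T) = k) \<and> (\<exists>B\<in>\<B>. card (B\<inter>T) = Suc k) \<or>
     (\<forall>B\<in>F. card (B\<inter>T) = Suc k) \<and> (\<exists>B\<in>\<B>. card (B\<inter>T) = k))"

lemma comb2:
  fixes w :: "'a \<Rightarrow> real"
  assumes M: "matroid E \<B>" and r2: "\<forall>B\<in>\<B>. card B \<le> 2"
    and mn: "\<forall>B\<in>\<B>. m \<le> sum w B" and Fd: "F = {B\<in>\<B>. sum w B = m}"
    and Fne: "F \<noteq> {}" and FV: "F \<noteq> \<B>"
  shows "\<exists>T k. wit E \<B> F T k"
proof (cases "\<exists>e\<in>\<Union>\<B>. \<forall>B\<in>F. e \<notin> B")
  case True
  then obtain e B0 where e: "e \<in> B0" "B0 \<in> \<B>" "\<forall>B\<in>F. e\<notin>B" by auto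
  have "e \<in> E" using m_sub[OF M e(2)] e by auto
  have ci: "\<And>B. card (B \<inter> {e}) = (if e \<in> B then 1 else 0)" by auto
  have "wit E \<B> F {e} 0" unfolding wit_def using e \<open>e\<in>E\<close> by (auto simp: ci)
  thus ?thesis by blast
next
  case False
  hence part: "\<forall>e\<in>\<Union>\<B>. \<exists>B\<in>F. e\<in>B" by blast
  obtain B0 where B0: "B0 \<in> F" using Fne by auto
  have B0B: "B0 \<in> \<B>" using B0 Fd by auto
  define r where "r = card B0"
  have cardr: "\<forall>B\<in>\<B>. card B = r" using card_eq[OF M _ B0B] r_def by blast
  have finB: "\<forall>B\<in>\<B>. finite B" using m_fin[OF M] by blast
  have "r \<le> 2" using r2 B0B r_def by auto
  then consider "r = 0" | "r = 1" | "r = 2" by linarith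
  then show ?thesis
  proof cases
    case 1
    hence "\<forall>B\<in>\<B>. B = {}" using cardr finB by auto
    hence "\<B> \<subseteq> F" using B0 B0B by (metis subsetI)
    thus ?thesis using FV Fd by auto
  next
    case 2
    have "\<B> \<subseteq> F"
    proof
      fix B assume B: "B \<in> \<B>"
      then obtain e where e: "B = {e}" using cardr 2 card_1_singletonE by metis
      then obtain B' where B': "B'\<in>F" "e\<in>B'" using part B by auto
      then obtain e' where "B' = {e'}" using cardr 2 card_1_singletonE Fd by (metis (no_types, lifting) mem_Collect_eq)
      thus "B\<in>F" using e B' by auto
    qed
    thus ?thesis using FV Fd by auto
  next
    case 3
    have two: "\<And>B. B\<in>\<B> \<Longrightarrow> \<exists>p q. p \<noteq> q \<and> B = {p,q}" using cardr 3 card_2_iff by metis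
    have partner: "\<And>e. e \<in> \<Union>\<B> \<Longrightarrow> \<exists>f. f \<noteq> e \<and> {e,f} \<in> \<B> \<and> w e + w f = m"
    proof -
      fix e assume "e \<in> \<Union>\<B>"
      then obtain B where B: "B \<in> F" "e \<in> B" using part by blast
      then obtain p q where pq: "p \<noteq> q" "B = {p,q}" using two Fd by blast
      show "\<exists>f. f \<noteq> e \<and> {e,f} \<in> \<B> \<and> w e + w f = m"
      proof (cases "e = p")
        case True thus ?thesis using B pq Fd by (intro exI[of _ q]) auto
      next
        case False hence "e = q" using B pq by auto
        thus ?thesis using B pq Fd by (intro exI[of _ p]) (auto simp: insert_commute)
      qed
    qed
    define T where "T = {e\<in>E. w e < m/2}"
    have le1: "\<forall>B\<in>\<B>. card (B\<inter>T) \<le> 1"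
    proof
      fix B assume B: "B \<in> \<B>"
      then obtain p q where pq: "p \<noteq> q" "B = {p,q}" using two by blast
      have "m \<le> w p + w q" using mn B pq by auto
      hence "\<not> (p \<in> T \<and> q \<in> T)" unfolding T_def by auto
      hence "B \<inter> T \<subseteq> {p} \<or> B \<inter> T \<subseteq> {q}" using pq by auto
      thus "card (B\<inter>T) \<le> 1" using card_mono[of "{p}" "B\<inter>T"] card_mono[of "{q}" "B\<inter>T"] by auto
    qed
    show ?thesis
    proof (cases "(\<forall>B\<in>F. card (B\<inter>T) = 1) \<and> (\<exists>B\<in>\<B>. card (B\<inter>T) = 0)")
      case True
      have "T \<subseteq> E" unfolding T_def by auto
      moreover have "\<forall>B\<in>\<B>. card (B\<inter>T) = 0 \<or> card (B\<inter>T) = Suc 0" using le1 by (simp add: le_Suc_eq)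
      ultimately have "wit E \<B> F T 0" unfolding wit_def using True by simp
      thus ?thesis by blast
    next
      case False
      have FB: "F \<subseteq> \<B>" using Fd by auto
      have "(\<exists>B0\<in>F. card (B0\<inter>T) \<noteq> 1) \<or> (\<forall>B\<in>\<B>. card (B\<inter>T) \<noteq> 0)" using False by auto
      hence "(\<exists>B0\<in>F. card (B0\<inter>T) = 0) \<or> (\<forall>B\<in>\<B>. card (B\<inter>T) = 1)"
      proof
        assume "\<exists>B0\<in>F. card (B0\<inter>T) \<noteq> 1"
        then obtain B0 where "B0 \<in> F" "card (B0\<inter>T) \<noteq> 1" by blast
        moreover have "card (B0\<inter>T) \<le> 1" using le1 FB \<open>B0\<in>F\<close> by blast
        ultimately have "card (B0\<inter>T) = 0" by linarith
        thus ?thesis using \<open>B0\<in>F\<close> by blast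
      next
        assume "\<forall>B\<in>\<B>. card (B\<inter>T) \<noteq> 0"
        have "\<forall>B\<in>\<B>. card (B\<inter>T) = 1"
        proof
          fix B assume "B \<in> \<B>"
          hence "card (B\<inter>T) \<le> 1" "card (B\<inter>T) \<noteq> 0" using le1 \<open>\<forall>B\<in>\<B>. card (B\<inter>T) \<noteq> 0\<close> by blast+
          thus "card (B\<inter>T) = 1" by linarith
        qed
        thus ?thesis by blast
      qed
      then have "\<B> \<subseteq> F"
      proof
        assume "\<exists>B0\<in>F. card (B0\<inter>T) = 0"
        then obtain B1 where B1: "B1 \<in> F" "card (B1\<inter>T) = 0" by auto
        have B1B: "B1 \<in> \<B>" using B1 Fd by auto
        obtain p q where pq: "p\<noteq>q" "B1 = {p,q}" using two B1B by blast
        have "B1 \<inter> T = {}" using B1 finB B1B by auto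
        hence "p \<notin> T" "q \<notin> T" using pq by auto
        moreover have "p \<in> E" "q \<in> E" using m_sub[OF M B1B] pq by auto
        ultimately have "w p \<ge> m/2" "w q \<ge> m/2" unfolding T_def by auto
        moreover have "w p + w q = m" using B1 Fd pq by simp
        ultimately have wp: "w p = m/2" "w q = m/2" by linarith+
        have noT: "\<forall>e\<in>\<Union>\<B>. e \<notin> T"
        proof (intro ballI notI)
          fix t assume t: "t \<in> \<Union>\<B>" "t \<in> T"
          obtain s where s: "s\<noteq>t" "{t,s}\<in>\<B>" "w t + w s = m" using partner t(1) by blast
          have wt: "w t < m/2" using t T_def by auto
          have "s \<notin> {p,q}" using wp s wt by auto
          hence "s \<in> {t,s} - B1" using pq by auto
          from m_exch[OF M s(2) B1B this] obtain y where y: "y \<in> B1 - {t,s}" "insert y ({t,s} - {s}) \<in> \<B>" by blast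
          have "insert y ({t,s} - {s}) = {y,t}" using s by auto
          hence "{y,t} \<in> \<B>" using y by simp
          moreover have "y \<noteq> t" using y by auto
          ultimately have "m \<le> sum w {y,t}" using mn by blast
          hence "m \<le> w y + w t" using \<open>y\<noteq>t\<close> by simp
          moreover have "w y = m/2" using y pq wp by auto
          ultimately show False using wt by linarith
        qed
        have half: "\<forall>e\<in>\<Union>\<B>. w e = m/2"
        proof
          fix e assume e: "e \<in> \<Union>\<B>"
          obtain f where f: "f\<noteq>e" "{e,f}\<in>\<B>" "w e + w f = m" using partner e by blast
          have "f \<in> \<Union>\<B>" using f by auto
          moreover have "e \<in> E" "f \<in> E" using m_sub[OF M f(2)] by auto
          moreover have "e \<notin> T" "f \<notin> T" using noT e \<open>f \<in> \<Union>\<B>\<close> by blast+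
          ultimately have "w e \<ge> m/2" "w f \<ge> m/2" unfolding T_def by auto
          thus "w e = m/2" using f by linarith
        qed
        show "\<B> \<subseteq> F"
        proof
          fix B assume B: "B \<in> \<B>"
          then obtain u v where uv: "u\<noteq>v" "B = {u,v}" using two by blast
          have "w u = m/2" "w v = m/2" using half B uv by auto
          thus "B \<in> F" using Fd B uv by auto
        qed
      next
        assume all1: "\<forall>B\<in>\<B>. card (B\<inter>T) = 1"
        show "\<B> \<subseteq> F"
        proof (rule ccontr)
          assume "\<not> \<B> \<subseteq> F"
          then obtain B where B: "B \<in> \<B>" "B \<notin> F" by auto
          obtain t where t: "B \<inter> T = {t}" using all1 B card_1_singletonE by blast
          obtain p q where pq: "p\<noteq>q" "B = {p,q}" using two B by blast
          have tB: "t \<in> B" "t \<in> T" using t by blast+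
          obtain s where s: "s \<in> B" "s \<noteq> t"
          proof (cases "p = t")
            case True thus ?thesis using that pq by blast
          next
            case False thus ?thesis using that pq by blast
          qed
          have "{t,s} \<subseteq> B" using tB s by blast
          moreover have "card {t,s} = card B" using s(2) cardr B 3 by simp
          ultimately have Bts: "B = {t,s}" using card_subset_eq finB B by blast
          have sT: "s \<notin> T" using t s by blast
          have tT: "t \<in> T" "t \<noteq> s" using tB s by blast+
          obtain t' where t': "t'\<noteq>s" "{s,t'}\<in>\<B>" "w s + w t' = m" using partner B s by blast
          have "t' \<in> T"
          proof (rule ccontr)
            assume "t' \<notin> T"
            hence "{s,t'} \<inter> T = {}" using sT by auto
            thus False using all1 t'(2) by (metis card.empty zero_neq_one)
          qed
          obtain s' where s': "s'\<noteq>t" "{t,s'}\<in>\<B>" "w t + w s' = m" using partner B tT Bts by blast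
          have "s' \<notin> T"
          proof
            assume "s' \<in> T"
            hence "{t,s'} \<inter> T = {t,s'}" using tT by auto
            moreover have "card {t,s'} = 2" using s'(1) by simp
            moreover have "card ({t,s'} \<inter> T) = 1" using all1 s'(2) by blast
            ultimately show False by simp
          qed
          show False
          proof (cases "t = t'")
            case True
            hence "B \<in> F" using Bts t' Fd B by (auto simp: insert_commute)
            thus False using B by simp
          next
            case False
            have "t \<in> {t,s'} - {s,t'}" using False tT by auto
            from m_exch[OF M s'(2) t'(2) this] obtain y where y: "y \<in> {s,t'} - {t,s'}" "insert y ({t,s'} - {t}) \<in> \<B>" by blast
            have "{t,s'} - {t} = {s'}" using s'(1) by auto
            hence yB: "{y,s'} \<in> \<B>" using y(2) by simp
            show False
            proof (cases "y = s")
              case True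
              hence "{y,s'} \<inter> T = {}" using sT \<open>s'\<notin>T\<close> by auto
              thus False using all1 yB by (metis card.empty zero_neq_one)
            next
              case False
              hence "y = t'" using y by auto
              hence "{t',s'} \<in> \<B>" using yB by simp
              have "t' \<noteq> s'" using \<open>t'\<in>T\<close> \<open>s'\<notin>T\<close> by auto
              hence "sum w {t',s'} = w t' + w s'" by simp
              moreover have "m \<le> sum w {t',s'}" using mn \<open>{t',s'} \<in> \<B>\<close> by blast
              ultimately have "m \<le> w t' + w s'" by simp
              hence "w t + w s \<le> m" using t' s' by linarith
              moreover have "sum w B = w t + w s" using Bts tT by simp
              moreover have "m \<le> sum w B" using mn B by blast
              ultimately have "sum w B = m" by linarith
              hence "B \<in> F" using B Fd by simp
              thus False using B by simp
            qed
          qed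
        qed
      qed
      thus ?thesis using FV Fd by auto
    qed
  qed
qed



lemma wit_dual:
  assumes M: "matroid E \<B>" and W: "wit E ((\<lambda>B. E - B) ` \<B>) ((\<lambda>B. E-B) ` F) T k"
    and FB: "F \<subseteq> \<B>" and Fne: "F \<noteq> {}"
  shows "\<exists>T k. wit E \<B> F T k"
proof -
  have TE: "T \<subseteq> E" using W unfolding wit_def by blast
  have finT: "finite T" using TE M unfolding matroid_def by (meson finite_subset)
  have cB: "card ((E-B)\<inter>T) + card (B\<inter>T) = card T" if "B\<in>\<B>" for B
  proof -
    have "(E-B)\<inter>T = T - (B\<inter>T)" using TE by blast
    hence "card ((E-B)\<inter>T) = card T - card (B\<inter>T)" using finT by (simp add: card_Diff_subset)
    moreover have "card (B\<inter>T) \<le> card T" using finT by (simp add: card_mono)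
    ultimately show ?thesis by simp
  qed
  have allD: "\<forall>B\<in>\<B>. card ((E-B)\<inter>T) = k \<or> card ((E-B)\<inter>T) = Suc k" using W by (simp add: wit_def)
  have side: "(\<forall>B\<in>F. card ((E-B)\<inter>T) = k) \<and> (\<exists>B\<in>\<B>. card ((E-B)\<inter>T) = Suc k) \<or>
     (\<forall>B\<in>F. card ((E-B)\<inter>T) = Suc k) \<and> (\<exists>B\<in>\<B>. card ((E-B)\<inter>T) = k)" using W by (simp add: wit_def)
  obtain B0 where B0: "B0 \<in> F" using Fne by blast
  have "\<exists>B\<in>\<B>. card ((E-B)\<inter>T) = Suc k" using side B0 FB by blast
  then obtain B1 where "B1 \<in> \<B>" "card ((E-B1)\<inter>T) = Suc k" by blast
  hence sk: "Suc k \<le> card T" using cB by fastforce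
  define k' where "k' = card T - Suc k"
  have conv1: "card ((E-B)\<inter>T) = k \<longleftrightarrow> card (B\<inter>T) = Suc k'" if "B\<in>\<B>" for B
    using cB[OF that] sk k'_def by linarith
  have conv2: "card ((E-B)\<inter>T) = Suc k \<longleftrightarrow> card (B\<inter>T) = k'" if "B\<in>\<B>" for B
    using cB[OF that] sk k'_def by linarith
  have a1: "\<forall>B\<in>\<B>. card (B\<inter>T) = k' \<or> card (B\<inter>T) = Suc k'" using allD conv1 conv2 by blast
  have a2: "(\<forall>B\<in>F. card (B\<inter>T) = k') \<and> (\<exists>B\<in>\<B>. card (B\<inter>T) = Suc k') \<or>
     (\<forall>B\<in>F. card (B\<inter>T) = Suc k') \<and> (\<exists>B\<in>\<B>. card (B\<inter>T) = k')"
  proof (rule disjE[OF side])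
    assume h: "(\<forall>B\<in>F. card ((E-B)\<inter>T) = k) \<and> (\<exists>B\<in>\<B>. card ((E-B)\<inter>T) = Suc k)"
    have "\<forall>B\<in>F. card (B\<inter>T) = Suc k'" using h conv1 FB by blast
    moreover have "\<exists>B\<in>\<B>. card (B\<inter>T) = k'" using h conv2 by blast
    ultimately show ?thesis by blast
  next
    assume h: "(\<forall>B\<in>F. card ((E-B)\<inter>T) = Suc k) \<and> (\<exists>B\<in>\<B>. card ((E-B)\<inter>T) = k)"
    have "\<forall>B\<in>F. card (B\<inter>T) = k'" using h conv2 FB by blast
    moreover have "\<exists>B\<in>\<B>. card (B\<inter>T) = Suc k'" using h conv1 by blast
    ultimately show ?thesis by blast
  qed
  have "wit E \<B> F T k'" unfolding wit_def using TE a1 a2 by blast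
  thus ?thesis by blast
qed

lemma comb_all:
  fixes w :: "'a \<Rightarrow> real"
  assumes M: "matroid E \<B>" and R: "(\<forall>B\<in>\<B>. card B \<le> 2) \<or> (card E \<le> 5 \<and> (\<forall>B\<in>\<B>. card B \<ge> 3))"
    and mn: "\<forall>B\<in>\<B>. m \<le> sum w B" and Fd: "F = {B\<in>\<B>. sum w B = m}"
    and Fne: "F \<noteq> {}" and FV: "F \<noteq> \<B>"
  shows "\<exists>T k. wit E \<B> F T k"
proof (cases "\<forall>B\<in>\<B>. card B \<le> 2")
  case True
  show ?thesis using comb2[OF M True mn Fd Fne FV] .
next
  case False
  hence R2: "card E \<le> 5" "\<forall>B\<in>\<B>. card B \<ge> 3" using R by blast+
  have finE: "finite E" using M unfolding matroid_def by blast
  define D where "D = (\<lambda>B. E - B) ` \<B>"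
  define FD where "FD = (\<lambda>B. E - B) ` F"
  define w' where "w' = (\<lambda>e. - w e)"
  define m' where "m' = m - sum w E"
  have MD: "matroid E D" unfolding D_def using dual_matroid[OF M] .
  have sw: "sum w' (E - B) = sum w B - sum w E" if "B \<in> \<B>" for B
    using sum_diff[OF finE m_sub[OF M that], of w'] unfolding w'_def by (simp add: sum_negf)
  have cD: "\<forall>C\<in>D. card C \<le> 2"
  proof
    fix C assume "C \<in> D"
    then obtain B where B: "B\<in>\<B>" "C = E - B" unfolding D_def by blast
    have "card C = card E - card B" using B m_sub[OF M B(1)] m_fin[OF M B(1)] by (simp add: card_Diff_subset)
    thus "card C \<le> 2" using R2 B by fastforce
  qed
  have mnD: "\<forall>C\<in>D. m' \<le> sum w' C"
  proof
    fix C assume "C \<in> D"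
    then obtain B where B: "B\<in>\<B>" "C = E - B" unfolding D_def by blast
    have "m \<le> sum w B" using mn B by blast
    thus "m' \<le> sum w' C" using sw[OF B(1)] B(2) m'_def by simp
  qed
  have FdD: "FD = {C\<in>D. sum w' C = m'}"
  proof
    show "FD \<subseteq> {C\<in>D. sum w' C = m'}"
    proof
      fix C assume "C \<in> FD"
      then obtain B where B: "B\<in>F" "C = E - B" unfolding FD_def by blast
      have BB: "B \<in> \<B>" "sum w B = m" using B Fd by auto
      hence "sum w' C = m'" using sw[OF BB(1)] B(2) m'_def by simp
      moreover have "C \<in> D" unfolding D_def using BB B by blast
      ultimately show "C \<in> {C\<in>D. sum w' C = m'}" by blast
    qed
  next
    show "{C\<in>D. sum w' C = m'} \<subseteq> FD"
    proof
      fix C assume "C \<in> {C\<in>D. sum w' C = m'}"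
      then obtain B where B: "B\<in>\<B>" "C = E - B" "sum w' C = m'" unfolding D_def by blast
      hence "sum w B = m" using sw m'_def by simp
      hence "B \<in> F" using Fd B by simp
      thus "C \<in> FD" unfolding FD_def using B by blast
    qed
  qed
  have FDne: "FD \<noteq> {}" using Fne unfolding FD_def by simp
  have inj: "inj_on (\<lambda>B. E - B) (Pow E)" unfolding inj_on_def by blast
  have BP: "\<B> \<subseteq> Pow E" using m_sub[OF M] by blast
  have FB: "F \<subseteq> \<B>" using Fd by blast
  have FDV: "FD \<noteq> D"
  proof
    assume "FD = D"
    hence "F = \<B>" unfolding FD_def D_def using inj_on_image_eq_iff[OF inj order.trans[OF FB BP] BP] by blast
    thus False using FV by simp
  qed
  obtain T k where "wit E D FD T k" using comb2[OF MD cD mnD FdD FDne FDV] by blast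
  thus ?thesis using wit_dual[OF M _ FB Fne] unfolding D_def FD_def by blast
qed

lemma aff_ind: "finite E \<Longrightarrow> B \<subseteq> E \<Longrightarrow> aff_val E a c (indicator B) = c + sum a B"
  unfolding aff_val_def by (simp add: Int_absorb1)

lemma levels:
  assumes fin: "finite V" and fac: "facet E V {v\<in>V. aff_val E a c v = 0}"
    and nn: "\<forall>v\<in>V. aff_val E a c v \<ge> 0"
    and d: "d > 0" and g2: "\<forall>v\<in>V. aff_val E a' c' v = 0 \<or> aff_val E a' c' v = d"
    and sub: "{v\<in>V. aff_val E a c v = 0} \<subseteq> {v\<in>V. aff_val E a' c' v = 0}"
    and ne: "{v\<in>V. aff_val E a' c' v = 0} \<noteq> V"
  shows "card (aff_val E a c ` V) \<le> 2"
proof -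
  define F where "F = {v\<in>V. aff_val E a c v = 0}"
  define G where "G = {v\<in>V. aff_val E a' c' v = 0}"
  have facG: "face E V G" unfolding face_def G_def using g2 d
    by (intro exI[of _ a'] exI[of _ c']) force
  have FG: "G = F"
  proof -
    have maxF: "\<And>G. face E V G \<Longrightarrow> G \<noteq> V \<Longrightarrow> F \<subseteq> G \<Longrightarrow> G = F"
      using fac unfolding facet_def F_def by blast
    show ?thesis by (rule maxF[OF facG]) (use ne sub in \<open>auto simp: G_def F_def\<close>)
  qed
  have FV: "F \<noteq> V" using fac unfolding facet_def F_def by blast
  hence ne2: "V - F \<noteq> {}" unfolding F_def by auto
  define \<alpha> where "\<alpha> = Min (aff_val E a c ` (V - F))"
  have finVF: "finite (aff_val E a c ` (V - F))" using fin by simp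
  have "\<alpha> \<in> aff_val E a c ` (V - F)" unfolding \<alpha>_def using finVF ne2 by (intro Min_in) auto
  then obtain v0 where v0: "v0 \<in> V - F" "aff_val E a c v0 = \<alpha>" by auto
  have \<alpha>le: "\<forall>v\<in>V-F. \<alpha> \<le> aff_val E a c v" unfolding \<alpha>_def using finVF by auto
  have \<alpha>pos: "\<alpha> > 0" using v0 nn unfolding F_def by force
  define t where "t = \<alpha> / d"
  define h where "h = (\<lambda>e. a e - t * a' e)"
  define ch where "ch = c - t * c'"
  have hv: "aff_val E h ch v = aff_val E a c v - t * aff_val E a' c' v" for v
    unfolding aff_val_def h_def ch_def by (simp add: algebra_simps sum_subtractf sum_distrib_left)
  have gF: "\<forall>v\<in>V-F. aff_val E a' c' v = d" using g2 FG unfolding G_def by auto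
  have gF0: "\<forall>v\<in>F. aff_val E a' c' v = 0" using FG unfolding G_def by auto
  have td: "t * d = \<alpha>" unfolding t_def using d by simp
  have hnn: "\<forall>v\<in>V. aff_val E h ch v \<ge> 0"
  proof
    fix v assume v: "v \<in> V"
    show "aff_val E h ch v \<ge> 0"
    proof (cases "v \<in> F")
      case True thus ?thesis using hv gF0 unfolding F_def by simp
    next
      case False
      hence "v \<in> V - F" using v by blast
      hence "\<alpha> \<le> aff_val E a c v" "aff_val E a' c' v = d" using \<alpha>le gF by blast+
      thus ?thesis using hv[of v] td by simp
    qed
  qed
  define H where "H = {v\<in>V. aff_val E h ch v = 0}"
  have faceH: "face E V H" unfolding face_def H_def by (intro exI[of _ h] exI[of _ ch] conjI hnn refl)
  have FH: "F \<subseteq> H" unfolding H_def using hv gF0 unfolding F_def by auto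
  have "v0 \<in> H" unfolding H_def using v0 hv gF td by auto
  hence "H \<noteq> F" using v0 by blast
  moreover have maxF: "\<And>G. face E V G \<Longrightarrow> G \<noteq> V \<Longrightarrow> F \<subseteq> G \<Longrightarrow> G = F"
    using fac unfolding facet_def F_def by blast
  ultimately have HV: "H = V" using faceH FH by blast
  have "\<forall>v\<in>V-F. aff_val E a c v = \<alpha>"
  proof
    fix v assume v: "v \<in> V - F"
    hence "aff_val E h ch v = 0" using HV unfolding H_def by blast
    thus "aff_val E a c v = \<alpha>" using hv gF v td by simp
  qed
  hence "aff_val E a c ` V \<subseteq> {0, \<alpha>}"
  proof (intro subsetI)
    fix y assume all: "\<forall>v\<in>V-F. aff_val E a c v = \<alpha>" and y: "y \<in> aff_val E a c ` V"
    then obtain v where v: "v \<in> V" "y = aff_val E a c v" by blast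
    show "y \<in> {0, \<alpha>}"
    proof (cases "v \<in> F")
      case True thus ?thesis using v unfolding F_def by simp
    next
      case False thus ?thesis using v all by simp
    qed
  qed
  hence "card (aff_val E a c ` V) \<le> card {0, \<alpha>}" by (rule card_mono[rotated]) simp
  also have "\<dots> \<le> 2" by (cases "\<alpha> = 0") simp_all
  finally show ?thesis .
qed

lemma reduce:
  assumes fin: "finite V"
    and H: "\<And>a c. \<forall>v\<in>V. aff_val E a c v \<ge> 0 \<Longrightarrow> {v\<in>V. aff_val E a c v = 0} \<noteq> {} \<Longrightarrow>
       {v\<in>V. aff_val E a c v = 0} \<noteq> V \<Longrightarrow>
       \<exists>a' c' d. d > 0 \<and> (\<forall>v\<in>V. aff_val E a' c' v = 0 \<or> aff_val E a' c' v = d) \<and>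
         {v\<in>V. aff_val E a c v = 0} \<subseteq> {v\<in>V. aff_val E a' c' v = 0} \<and>
         {v\<in>V. aff_val E a' c' v = 0} \<noteq> V"
  shows "k_level E V 2"
  unfolding k_level_def
proof (intro allI impI)
  fix a c assume fd: "facet_defining E V a c"
  have nn: "\<forall>v\<in>V. aff_val E a c v \<ge> 0" and fac: "facet E V {v\<in>V. aff_val E a c v = 0}"
    using fd unfolding facet_defining_def by auto
  show "card (aff_val E a c ` V) \<le> 2"
  proof (cases "V = {}")
    case True thus ?thesis by simp
  next
    case Vne: False
    show ?thesis
    proof (cases "{v\<in>V. aff_val E a c v = 0} = {}")
      case True
      have one: "aff_val E (\<lambda>_. 0) 1 v = 1" for v unfolding aff_val_def by simp
      show ?thesis
        by (rule levels[OF fin fac nn, of 1 "\<lambda>_. 0" 1]) (use True Vne one in auto)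
    next
      case False
      have "{v\<in>V. aff_val E a c v = 0} \<noteq> V" using fac unfolding facet_def by blast
      then obtain a' c' d where "d > 0" "\<forall>v\<in>V. aff_val E a' c' v = 0 \<or> aff_val E a' c' v = d"
         "{v\<in>V. aff_val E a c v = 0} \<subseteq> {v\<in>V. aff_val E a' c' v = 0}"
         "{v\<in>V. aff_val E a' c' v = 0} \<noteq> V" using H[OF nn False] by blast
      thus ?thesis using levels[OF fin fac nn] by blast
    qed
  qed
qed



lemma main_k:
  assumes M: "matroid E \<B>" and R: "(\<forall>B\<in>\<B>. card B \<le> 2) \<or> (card E \<le> 5 \<and> (\<forall>B\<in>\<B>. card B \<ge> 3))"
  shows "k_level E (base_config E \<B>) 2"
proof -
  have finE: "finite E" using M unfolding matroid_def by blast
  have Vd: "base_config E \<B> = indicator ` \<B>" unfolding base_config_def by blast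
  have finB: "finite \<B>" using m_sub[OF M] finE by (meson Pow_iff finite_Pow_iff rev_finite_subset subsetI)
  have av: "aff_val E a c (indicator B) = c + sum a B" if "B \<in> \<B>" for a c B
    using aff_ind[OF finE m_sub[OF M that]] .
  show ?thesis unfolding Vd
  proof (rule reduce)
    show "finite (indicator ` \<B> :: ('a \<Rightarrow> real) set)" using finB by simp
  next
    fix a :: "'a \<Rightarrow> real" and c :: real
    let ?V = "indicator ` \<B> :: ('a \<Rightarrow> real) set"
    assume nn: "\<forall>v\<in>?V. aff_val E a c v \<ge> 0"
      and Zne: "{v\<in>?V. aff_val E a c v = 0} \<noteq> {}"
      and ZV: "{v\<in>?V. aff_val E a c v = 0} \<noteq> ?V"
    define F where "F = {B\<in>\<B>. sum a B = -c}"
    have mn: "\<forall>B\<in>\<B>. -c \<le> sum a B"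
    proof
      fix B assume B: "B \<in> \<B>"
      hence "aff_val E a c (indicator B) \<ge> 0" using nn by blast
      thus "-c \<le> sum a B" using av[OF B] by simp
    qed
    have Fne: "F \<noteq> {}"
    proof -
      obtain v where v: "v \<in> ?V" "aff_val E a c v = 0" using Zne by blast
      then obtain B where B: "B \<in> \<B>" "v = indicator B" by blast
      hence "sum a B = -c" using v av[OF B(1)] by simp
      thus ?thesis unfolding F_def using B by blast
    qed
    have FV: "F \<noteq> \<B>"
    proof
      assume "F = \<B>"
      have "\<forall>v\<in>?V. aff_val E a c v = 0"
      proof
        fix v assume "v \<in> ?V"
        then obtain B where B: "B \<in> \<B>" "v = indicator B" by blast
        hence "B \<in> F" using \<open>F = \<B>\<close> by simp
        hence "sum a B = -c" unfolding F_def by simp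
        thus "aff_val E a c v = 0" using av[OF B(1)] B(2) by simp
      qed
      thus False using ZV by blast
    qed
    obtain T k where W: "wit E \<B> F T k" using comb_all[OF M R mn F_def Fne FV] by blast
    have TE: "T \<subseteq> E" and allk: "\<forall>B\<in>\<B>. card (B\<inter>T) = k \<or> card (B\<inter>T) = Suc k"
      using W unfolding wit_def by blast+
    have si: "sum (indicator T) B = real (card (B\<inter>T))" if "B \<in> \<B>" for B
    proof -
      have "sum (indicator T) B = (\<Sum>x\<in>B. (\<lambda>_. 1::real) x * indicator T x)" by simp
      also have "\<dots> = (\<Sum>x\<in>B\<inter>T. (1::real))" by (rule sum_mult_indicator[OF m_fin[OF M that]])
      finally show ?thesis by simp
    qed
    have xT: "aff_val E (indicator T) c' (indicator B) = c' + real (card (B\<inter>T))" if "B \<in> \<B>" for c' B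
      using av[OF that] si[OF that] by simp
    have xT': "aff_val E (\<lambda>e. - indicator T e) c' (indicator B) = c' - real (card (B\<inter>T))" if "B \<in> \<B>" for c' B
      using av[OF that] si[OF that] by (simp add: sum_negf)
    have ZF: "\<And>B. B \<in> \<B> \<Longrightarrow> aff_val E a c (indicator B) = 0 \<Longrightarrow> B \<in> F"
      unfolding F_def using av by simp
    show "\<exists>a' c' d. d > 0 \<and> (\<forall>v\<in>?V. aff_val E a' c' v = 0 \<or> aff_val E a' c' v = d) \<and>
         {v\<in>?V. aff_val E a c v = 0} \<subseteq> {v\<in>?V. aff_val E a' c' v = 0} \<and>
         {v\<in>?V. aff_val E a' c' v = 0} \<noteq> ?V"
    proof (cases "(\<forall>B\<in>F. card (B\<inter>T) = k) \<and> (\<exists>B\<in>\<B>. card (B\<inter>T) = Suc k)")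
      case True
      let ?c = "- real k"
      have g1: "\<forall>v\<in>?V. aff_val E (indicator T) ?c v = 0 \<or> aff_val E (indicator T) ?c v = 1"
        using allk xT by auto
      have g2: "{v\<in>?V. aff_val E a c v = 0} \<subseteq> {v\<in>?V. aff_val E (indicator T) ?c v = 0}"
      proof
        fix v assume "v \<in> {v\<in>?V. aff_val E a c v = 0}"
        then obtain B where B: "B \<in> \<B>" "v = indicator B" "aff_val E a c (indicator B) = 0" by blast
        hence "B \<in> F" using ZF by blast
        hence "card (B\<inter>T) = k" using True by blast
        thus "v \<in> {v\<in>?V. aff_val E (indicator T) ?c v = 0}" using B xT by simp
      qed
      obtain B1 where B1: "B1 \<in> \<B>" "card (B1\<inter>T) = Suc k" using True by blast
      have "aff_val E (indicator T) ?c (indicator B1) = 1" using xT[OF B1(1)] B1(2) by simp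
      hence g3: "{v\<in>?V. aff_val E (indicator T) ?c v = 0} \<noteq> ?V" using B1(1) by force
      show ?thesis using g1 g2 g3 by (intro exI[of _ "indicator T"] exI[of _ ?c] exI[of _ 1]) simp
    next
      case False
      hence side: "(\<forall>B\<in>F. card (B\<inter>T) = Suc k) \<and> (\<exists>B\<in>\<B>. card (B\<inter>T) = k)"
        using W unfolding wit_def by blast
      let ?a = "\<lambda>e. - indicator T e :: real"
      let ?c = "real (Suc k)"
      have g1: "\<forall>v\<in>?V. aff_val E ?a ?c v = 0 \<or> aff_val E ?a ?c v = 1"
        using allk xT' by auto
      have g2: "{v\<in>?V. aff_val E a c v = 0} \<subseteq> {v\<in>?V. aff_val E ?a ?c v = 0}"
      proof
        fix v assume "v \<in> {v\<in>?V. aff_val E a c v = 0}"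
        then obtain B where B: "B \<in> \<B>" "v = indicator B" "aff_val E a c (indicator B) = 0" by blast
        hence "B \<in> F" using ZF by blast
        hence "card (B\<inter>T) = Suc k" using side by blast
        thus "v \<in> {v\<in>?V. aff_val E ?a ?c v = 0}" using B xT' by simp
      qed
      obtain B1 where B1: "B1 \<in> \<B>" "card (B1\<inter>T) = k" using side by blast
      have "aff_val E ?a ?c (indicator B1) = 1" using xT'[OF B1(1)] B1(2) by simp
      hence g3: "{v\<in>?V. aff_val E ?a ?c v = 0} \<noteq> ?V" using B1(1) by force
      show ?thesis using g1 g2 g3 by (intro exI[of _ ?a] exI[of _ ?c] exI[of _ 1]) simp
    qed
  qed
qed

theorem proposition3p1:
  fixes E :: "'a set" and \<B> :: "'a set set"
  assumes "matroid E \<B>"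
    and "matroid_rank E \<B> \<le> 2 \<or> card E \<le> 5"
  shows "k_level E (base_config E \<B>) 2"
proof -
  have M: "matroid E \<B>" by fact
  have ne: "\<B> \<noteq> {}" using M unfolding matroid_def by blast
  define B0 where "B0 = (SOME B. B \<in> \<B>)"
  have B0: "B0 \<in> \<B>" unfolding B0_def using ne by (simp add: some_in_eq)
  have rk: "matroid_rank E \<B> = card B0" unfolding matroid_rank_def B0_def ..
  have cc: "\<forall>B\<in>\<B>. card B = card B0" using card_eq[OF M _ B0] by blast
  have "(\<forall>B\<in>\<B>. card B \<le> 2) \<or> (card E \<le> 5 \<and> (\<forall>B\<in>\<B>. card B \<ge> 3))"
  proof (cases "card B0 \<le> 2")
    case True thus ?thesis using cc by simp
  next
    case False thus ?thesis using cc assms(2) rk by simp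
  qed
  thus ?thesis using main_k[OF M] by blast
qed


end
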